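(* Let $k$ be a positive integer and let $w_{n,k}$ denote the number of words $w_1\cdots w_n$ with all $w_i\in[n]$ containing no strictly decreasing subsequence of length $k+1$. Then for all positive integers $n,m$, $w_{n,k}\cdot w_{m,k}\le w_{n+m,k}$.
   Context: $[n]=\{1,\dots,n\}$. *)

theory Defs
  imports Main
begin

definition has_strict_dec_subseq :: "nat list \<Rightarrow> nat \<Rightarrow> bool" where
  "has_strict_dec_subseq w l \<longleftrightarrow>
     (\<exists>idx :: nat \<Rightarrow> nat.
        (\<forall>j<l. idx j < length w) \<and>
        (\<forall>j. Suc j < l \<longrightarrow> idx j < idx (Suc j) \<and> w ! idx j > w ! idx (Suc j)))"

definition w_count :: "nat \<Rightarrow> nat \<Rightarrow> nat" where
  "w_count n k = card {w :: nat list. length w = n \<and> set w \<subseteq> {1..n} \<and>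
                          \<not> has_strict_dec_subseq w (k + 1)}"

end

theory Submission
  imports Defs
begin

lemma key:
  fixes u v :: "nat list" and n m l :: nat
  assumes su: "set u \<subseteq> {1..n}" and sv: "set v \<subseteq> {1..m}"
    and h: "has_strict_dec_subseq (u @ map (\<lambda>x. x+n) v) l"
  shows "has_strict_dec_subseq u l \<or> has_strict_dec_subseq v l"
proof -
  let ?w = "u @ map (\<lambda>x. x+n) v"
  obtain idx where i1: "\<forall>j<l. idx j < length ?w"
    and i2: "\<forall>j. Suc j < l \<longrightarrow> idx j < idx (Suc j) \<and> ?w ! idx j > ?w ! idx (Suc j)"
    using h unfolding has_strict_dec_subseq_def by blast
  have nth: "\<And>i. i < length ?w \<Longrightarrow> ?w ! i = (if i < length u then u!i else v!(i - length u) + n)"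
    by (auto simp: nth_append)
  have uval: "\<And>i. i < length u \<Longrightarrow> u!i \<le> n" using su nth_mem by fastforce
  have vval: "\<And>i. i < length v \<Longrightarrow> v!i \<ge> 1" using sv nth_mem by fastforce
  have const: "\<And>j. j < l \<Longrightarrow> (idx j < length u \<longleftrightarrow> idx 0 < length u)"
  proof -
    fix j show "j < l \<Longrightarrow> (idx j < length u \<longleftrightarrow> idx 0 < length u)"
    proof (induction j)
      case 0 then show ?case by simp
    next
      case (Suc j)
      then have IH: "idx j < length u \<longleftrightarrow> idx 0 < length u" by simp
      have a: "idx j < idx (Suc j)" "?w!idx j > ?w ! idx (Suc j)" using i2 Suc.prems by auto
      have b: "idx (Suc j) < length ?w" "idx j < length ?w" using i1 Suc.prems by auto
      show ?case
      proof (cases "idx j < length u")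
        case True
        show ?thesis
        proof (rule ccontr)
          assume "\<not> ?thesis"
          then have "idx (Suc j) \<ge> length u" using True IH by auto
          then have "?w ! idx (Suc j) \<ge> n + 1" using nth[OF b(1)] b(1) vval[of "idx (Suc j) - length u"] by auto
          moreover have "?w ! idx j \<le> n" using nth[OF b(2)] True uval by auto
          ultimately show False using a(2) by auto
        qed
      next
        case False
        then show ?thesis using IH a(1) by auto
      qed
    qed
  qed
  show ?thesis
  proof (cases "idx 0 < length u")
    case True
    have "has_strict_dec_subseq u l"
      unfolding has_strict_dec_subseq_def
    proof (intro exI conjI allI impI)
      fix j assume "j < l" then show "idx j < length u" using const True by auto
    next
      fix j assume j: "Suc j < l"
      then show "idx j < idx (Suc j)" using i2 by auto
      have c: "idx j < length u" "idx (Suc j) < length u" using const True j by auto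
      show "u ! idx j > u ! idx (Suc j)" using i2 j c by (auto simp: nth_append)
    qed
    then show ?thesis by simp
  next
    case False
    have "has_strict_dec_subseq v l"
      unfolding has_strict_dec_subseq_def
    proof (intro exI[of _ "\<lambda>j. idx j - length u"] conjI allI impI)
      fix j assume "j < l" then show "idx j - length u < length v" using const False i1 by fastforce
    next
      fix j assume j: "Suc j < l"
      have c: "\<not> idx j < length u" "\<not> idx (Suc j) < length u" using const False j by auto
      show "idx j - length u < idx (Suc j) - length u" using i2 j c by auto
      have b: "idx (Suc j) < length ?w" "idx j < length ?w" using i1 j by auto
      show "v ! (idx j - length u) > v ! (idx (Suc j) - length u)"
        using i2 j c nth[OF b(1)] nth[OF b(2)] by auto
    qed
    then show ?thesis by simp
  qed
qed

theorem lemma3p5: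
  fixes k n m :: nat
  assumes "k \<ge> 1" and "n \<ge> 1" and "m \<ge> 1"
  shows "w_count n k * w_count m k \<le> w_count (n + m) k"
proof -
  define A where "A = {w :: nat list. length w = n \<and> set w \<subseteq> {1..n} \<and> \<not> has_strict_dec_subseq w (k + 1)}"
  define B where "B = {w :: nat list. length w = m \<and> set w \<subseteq> {1..m} \<and> \<not> has_strict_dec_subseq w (k + 1)}"
  define C where "C = {w :: nat list. length w = n + m \<and> set w \<subseteq> {1..n+m} \<and> \<not> has_strict_dec_subseq w (k + 1)}"
  define f where "f = (\<lambda>(u::nat list, v::nat list). u @ map (\<lambda>x. x+n) v)"
  have finC: "finite C"
  proof -
    have "C \<subseteq> {w. set w \<subseteq> {1..n+m} \<and> length w = n + m}" unfolding C_def by auto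
    moreover have "finite {w. set w \<subseteq> {1..n+m} \<and> length w = n + m}"
      by (rule finite_lists_length_eq) simp
    ultimately show ?thesis by (rule finite_subset)
  qed
  have inj: "inj_on f (A \<times> B)"
  proof (rule inj_onI)
    fix p q assume p: "p \<in> A \<times> B" and q: "q \<in> A \<times> B" and e: "f p = f q"
    obtain u v where pu: "p = (u, v)" by (cases p)
    obtain u' v' where qu: "q = (u', v')" by (cases q)
    have l: "length u = n" "length u' = n" using p q pu qu A_def by auto
    have "u = u'" using e l pu qu f_def by (metis append_eq_append_conv old.prod.case)
    moreover have "map (\<lambda>x. x+n) v = map (\<lambda>x. x+n) v'" using e pu qu f_def calculation by simp
    then have "v = v'" by (simp add: inj_map_eq_map inj_on_def)
    ultimately show "p = q" using pu qu by simp
  qed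
  have sub: "f ` (A \<times> B) \<subseteq> C"
  proof
    fix w assume "w \<in> f ` (A \<times> B)"
    then obtain u v where u: "u \<in> A" and v: "v \<in> B" and w: "w = u @ map (\<lambda>x. x+n) v"
      unfolding f_def by auto
    have su: "set u \<subseteq> {1..n}" and sv: "set v \<subseteq> {1..m}" using u v A_def B_def by auto
    have "length w = n + m" using u v w A_def B_def by auto
    moreover have "set w \<subseteq> {1..n+m}" using su sv w by auto
    moreover have "\<not> has_strict_dec_subseq w (k+1)"
      using key[OF su sv] w u v A_def B_def by blast
    ultimately show "w \<in> C" unfolding C_def by blast
  qed
  have "w_count n k * w_count m k = card (A \<times> B)"
    unfolding w_count_def A_def B_def by (simp add: card_cartesian_product)
  also have "\<dots> = card (f ` (A \<times> B))" using card_image[OF inj] by simp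
  also have "\<dots> \<le> card C" using card_mono[OF finC sub] .
  also have "\<dots> = w_count (n + m) k" unfolding C_def w_count_def by simp
  finally show ?thesis .
qed

end
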